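(* Let $n\geqslant 1$ and $\epsilon\in\,]0,1[$. The subset $\mathcal{P}^-_{0_n}(\partial\square[n],\epsilon)$ equipped with the relative topology is a closed subset of $\mathcal{P}^-_{0_n}(\square[n],\epsilon)$ which is $\Delta$-generated, $\Delta$-Hausdorff, metrizable, compact and sequentially compact.
   Context: ${\mathbf{Top}}$ denotes the category of $\Delta$-generated spaces, with internal hom $\mathbf{TOP}(-,-)$. $\square^{op}\mathbf{Set}$ is the category of precubical sets, $\square[n]$ the $n$-cube and $\partial\square[n]$ its boundary (cubes of dimension $\leqslant n-1$). For a precubical set $K$, $|K|_{geom}$ is its geometric realization and each $n$-cube $c$ induces $|c|_{geom}:[0,1]^n\to|K|_{geom}$. The initial vertex of an $n$-cube $c$ is $c^-=\partial_1^0\cdots\partial_n^0c$, and $\mathcal{C}^-_\alpha(K)=\{c\in K\mid\dim(c)\geqslant1,\ c^-=\alpha\}$. Let $0_n=(0,\dots,0)$. For $n\geqslant1$, $N_n(\epsilon)$ is the set of natural directed paths $\phi=(\phi_1,\dots,\phi_n):[0,\epsilon]\to[0,1]^n$ (non-decreasing in each coordinate, $\phi_1(t)+\dots+\phi_n(t)=t$), with the $\Delta$-kelleyfication of the relative topology from $\mathbf{TOP}([0,\epsilon],[0,1]^n)$. For $\alpha\in K_0$, $\mathcal{P}^-_\alpha(K,\epsilon)=\{|c|_{geom}\phi\mid c\in\mathcal{C}^-_\alpha(K),\ \phi\in N_{\dim(c)}(\epsilon)\}$ with the $\Delta$-kelleyfication of the relative topology from $\mathbf{TOP}([0,\epsilon],|K|_{geom})$.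 In particular $\mathcal{P}^-_{0_n}(\square[n],\epsilon)=N_n(\epsilon)$. *)

theory Defs
  imports "HOL-Analysis.Analysis" "HOL-Homology.Simplices"
begin

definition simplex_top :: "nat \<Rightarrow> (nat \<Rightarrow> real) topology" where
  "simplex_top k = subtopology (powertop_real UNIV) (standard_simplex k)"

definition delta_kelley :: "'a topology \<Rightarrow> 'a topology" where
  "delta_kelley X = topology (\<lambda>U. U \<subseteq> topspace X \<and>
     (\<forall>k f. continuous_map (simplex_top k) X f \<longrightarrow>
        openin (simplex_top k) {x \<in> topspace (simplex_top k). f x \<in> U}))"

definition delta_generated :: "'a topology \<Rightarrow> bool" where
  "delta_generated X \<longleftrightarrow> delta_kelley X = X"

text \<open>The binary product in Top (Delta-generated spaces) is the Delta-kelleyfication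
  of the usual product; a space is Delta-Hausdorff if its diagonal is closed in it.\<close>
definition delta_hausdorff :: "'a topology \<Rightarrow> bool" where
  "delta_hausdorff X \<longleftrightarrow>
     closedin (delta_kelley (prod_topology X X)) {(x, x) | x. x \<in> topspace X}"

definition sequentially_compact_top :: "'a topology \<Rightarrow> bool" where
  "sequentially_compact_top X \<longleftrightarrow>
     (\<forall>s::nat \<Rightarrow> 'a. (\<forall>m. s m \<in> topspace X) \<longrightarrow>
        (\<exists>l r. l \<in> topspace X \<and> strict_mono r \<and> limitin X (s \<circ> r) l sequentially))"

definition cmaps :: "real \<Rightarrow> 'b topology \<Rightarrow> (real \<Rightarrow> 'b) set" where
  "cmaps e Y = {f. continuous_map (top_of_set {0..e}) Y f \<and> f \<in> extensional {0..e}}"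

definition compact_open :: "real \<Rightarrow> 'b topology \<Rightarrow> (real \<Rightarrow> 'b) topology" where
  "compact_open e Y = subtopology
     (topology_generated_by
        {{f \<in> cmaps e Y. f ` K \<subseteq> U} | K U. compactin (top_of_set {0..e}) K \<and> openin Y U})
     (cmaps e Y)"

definition TOP :: "real \<Rightarrow> 'b topology \<Rightarrow> (real \<Rightarrow> 'b) topology" where
  "TOP e Y = delta_kelley (compact_open e Y)"

text \<open>Geometric realization of the n-cube: [0,1]^n inside R^n (coordinates i < n).\<close>
definition cube_top :: "nat \<Rightarrow> (nat \<Rightarrow> real) topology" where
  "cube_top n = subtopology (Euclidean_space n) {x. \<forall>i<n. 0 \<le> x i \<and> x i \<le> 1}"

definition N_set :: "nat \<Rightarrow> real \<Rightarrow> (real \<Rightarrow> nat \<Rightarrow> real) set" where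
  "N_set n e = {\<phi> \<in> topspace (TOP e (cube_top n)).
      (\<forall>i<n. mono_on {0..e} (\<lambda>t. \<phi> t i)) \<and> (\<forall>t\<in>{0..e}. (\<Sum>i<n. \<phi> t i) = t)}"

text \<open>N_n(eps) = P^-_{0_n}(square[n], eps), Delta-kelleyfied relative topology.\<close>
definition N_top :: "nat \<Rightarrow> real \<Rightarrow> (real \<Rightarrow> nat \<Rightarrow> real) topology" where
  "N_top n e = delta_kelley (subtopology (TOP e (cube_top n)) (N_set n e))"

text \<open>The geometric realization of the face of square[n] obtained by fixing the coordinates
  in S to 0 (its initial vertex is 0_n): it inserts zeros at the positions in S.\<close>
definition face_map :: "nat \<Rightarrow> nat set \<Rightarrow> (nat \<Rightarrow> real) \<Rightarrow> (nat \<Rightarrow> real)" where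
  "face_map n S x = (\<lambda>i. if i \<in> S \<or> n \<le> i then 0 else x (card {j. j < i \<and> j \<notin> S}))"

text \<open>The cubes c of the boundary of square[n] with dim c >= 1 and c^- = 0_n are exactly the
  faces fixing a set S of coordinates to 0, with 1 <= n - card S <= n - 1.\<close>
definition P_boundary :: "nat \<Rightarrow> real \<Rightarrow> (real \<Rightarrow> nat \<Rightarrow> real) set" where
  "P_boundary n e = {restrict (\<lambda>t. face_map n S (\<phi> t)) {0..e} | S k \<phi>.
      S \<subseteq> {..<n} \<and> S \<noteq> {} \<and> k = n - card S \<and> 1 \<le> k \<and> \<phi> \<in> N_set k e}"

end

theory Submission
  imports Defs
begin

definition cubeset :: "nat \<Rightarrow> (nat \<Rightarrow> real) set" where
  "cubeset n = {x. (\<forall>i\<ge>n. x i = 0) \<and> (\<forall>i<n. 0 \<le> x i \<and> x i \<le> 1)}"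

lemma cube_top_alt: "cube_top n = subtopology (powertop_real UNIV) (cubeset n)"
proof -
  have "{x::nat\<Rightarrow>real. \<forall>i\<ge>n. x i = 0} \<inter> {x. \<forall>i<n. 0 \<le> x i \<and> x i \<le> 1} = cubeset n"
    by (auto simp: cubeset_def)
  then show ?thesis
    unfolding cube_top_def Euclidean_space_def subtopology_subtopology by simp
qed

lemma topspace_cube_top [simp]: "topspace (cube_top n) = cubeset n"
  by (simp add: cube_top_alt)

lemma continuous_map_into_cube:
  "continuous_map X (cube_top n) f \<longleftrightarrow>
     (\<forall>i. continuous_map X euclideanreal (\<lambda>x. f x i)) \<and> f \<in> topspace X \<rightarrow> cubeset n"
  by (simp add: cube_top_alt continuous_map_in_subtopology continuous_map_componentwise_UNIV)

lemma continuous_map_cube_coord: "continuous_map (cube_top n) euclideanreal (\<lambda>x. x i)"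
  unfolding cube_top_alt
  by (rule continuous_map_from_subtopology) (metis UNIV_I continuous_map_product_coordinates)

lemma Hausdorff_cube: "Hausdorff_space (cube_top n)"
  unfolding cube_top_def by (rule Hausdorff_space_subtopology) (rule Hausdorff_Euclidean_space)

lemma compact_cube: "compact_space (cube_top n)"
proof -
  have eq: "cubeset n = PiE UNIV (\<lambda>i. if i < n then {0..1} else {0::real})"
  proof (rule Set.set_eqI)
    fix x :: "nat \<Rightarrow> real"
    have "((\<forall>i\<ge>n. x i = 0) \<and> (\<forall>i<n. 0 \<le> x i \<and> x i \<le> 1)) \<longleftrightarrow>
      (\<forall>i. x i \<in> (if i < n then {0..1} else {0}))"
    proof
      assume "(\<forall>i\<ge>n. x i = 0) \<and> (\<forall>i<n. 0 \<le> x i \<and> x i \<le> 1)"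
      then show "\<forall>i. x i \<in> (if i < n then {0..1} else {0})" by simp
    next
      assume a: "\<forall>i. x i \<in> (if i < n then {0..1} else {0})"
      show "(\<forall>i\<ge>n. x i = 0) \<and> (\<forall>i<n. 0 \<le> x i \<and> x i \<le> 1)"
      proof (intro conjI allI impI)
        fix i assume "n \<le> i" then show "x i = 0" using a[rule_format, of i] by simp
      next
        fix i assume "i < n" then show "0 \<le> x i" "x i \<le> 1" using a[rule_format, of i] by simp_all
      qed
    qed
    then show "x \<in> cubeset n \<longleftrightarrow> x \<in> PiE UNIV (\<lambda>i. if i < n then {0..1} else {0::real})"
      unfolding cubeset_def PiE_UNIV_domain Pi_iff by simp
  qed
  have "compactin (powertop_real UNIV) (cubeset n)"
    unfolding eq by (subst compactin_PiE) auto
  then show ?thesis unfolding cube_top_alt by (rule compact_space_subtopology)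
qed

lemma openin_delta_kelley:
  "openin (delta_kelley X) U \<longleftrightarrow> U \<subseteq> topspace X \<and>
     (\<forall>k f. continuous_map (simplex_top k) X f \<longrightarrow>
        openin (simplex_top k) {x \<in> topspace (simplex_top k). f x \<in> U})"
proof -
  define L where "L = (\<lambda>U. U \<subseteq> topspace X \<and>
     (\<forall>k f. continuous_map (simplex_top k) X f \<longrightarrow>
        openin (simplex_top k) {x \<in> topspace (simplex_top k). f x \<in> U}))"
  have "istopology L"
    unfolding istopology_def
  proof (rule conjI)
    show "\<forall>S T. L S \<longrightarrow> L T \<longrightarrow> L (S \<inter> T)"
    proof (intro allI impI)
      fix S T assume S: "L S" and T: "L T"
      have "openin (simplex_top k) {x \<in> topspace (simplex_top k). f x \<in> S \<inter> T}"
        if "continuous_map (simplex_top k) X f" for k f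
      proof -
        have "openin (simplex_top k) ({x \<in> topspace (simplex_top k). f x \<in> S} \<inter> {x \<in> topspace (simplex_top k). f x \<in> T})"
          using S T that unfolding L_def by blast
        moreover have "{x \<in> topspace (simplex_top k). f x \<in> S} \<inter> {x \<in> topspace (simplex_top k). f x \<in> T}
           = {x \<in> topspace (simplex_top k). f x \<in> S \<inter> T}" by blast
        ultimately show ?thesis by simp
      qed
      then show "L (S \<inter> T)" using S unfolding L_def by blast
    qed
    show "\<forall>K. (\<forall>S\<in>K. L S) \<longrightarrow> L (\<Union>K)"
    proof (intro allI impI)
      fix K assume K: "\<forall>S\<in>K. L S"
      have "openin (simplex_top k) {x \<in> topspace (simplex_top k). f x \<in> \<Union>K}"
        if "continuous_map (simplex_top k) X f" for k f
      proof -
        have "openin (simplex_top k) (\<Union>S\<in>K. {x \<in> topspace (simplex_top k). f x \<in> S})"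
          using K that unfolding L_def by blast
        moreover have "(\<Union>S\<in>K. {x \<in> topspace (simplex_top k). f x \<in> S})
           = {x \<in> topspace (simplex_top k). f x \<in> \<Union>K}" by blast
        ultimately show ?thesis by simp
      qed
      then show "L (\<Union>K)" using K unfolding L_def by blast
    qed
  qed
  then show ?thesis unfolding delta_kelley_def L_def[symmetric] by simp (simp add: L_def)
qed

lemma openin_imp_delta_kelley: "openin X U \<Longrightarrow> openin (delta_kelley X) U"
  by (auto simp: openin_delta_kelley openin_subset openin_continuous_map_preimage)

lemma topspace_delta_kelley [simp]: "topspace (delta_kelley X) = topspace X"
proof
  show "topspace (delta_kelley X) \<subseteq> topspace X"
    using openin_topspace[of "delta_kelley X"] unfolding openin_delta_kelley by blast
  show "topspace X \<subseteq> topspace (delta_kelley X)"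
    by (simp add: openin_imp_delta_kelley openin_subset)
qed

lemma closedin_imp_delta_kelley: "closedin X C \<Longrightarrow> closedin (delta_kelley X) C"
  by (simp add: closedin_def openin_imp_delta_kelley)

lemma continuous_map_delta_kelley:
  assumes "continuous_map (simplex_top k) X f"
  shows "continuous_map (simplex_top k) (delta_kelley X) f"
proof -
  have "openin (simplex_top k) {x \<in> topspace (simplex_top k). f x \<in> U}"
    if "openin (delta_kelley X) U" for U
    using that assms unfolding openin_delta_kelley by blast
  then show ?thesis using assms unfolding continuous_map_def by simp
qed

lemma delta_kelley_cong:
  assumes "topspace Y = topspace X" "\<And>U. openin X U \<Longrightarrow> openin Y U"
    "\<And>U. openin Y U \<Longrightarrow> openin (delta_kelley X) U"
  shows "delta_kelley Y = delta_kelley X"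
proof -
  have cm: "continuous_map (simplex_top k) Y f \<longleftrightarrow> continuous_map (simplex_top k) X f" for k f
  proof
    assume "continuous_map (simplex_top k) Y f"
    then show "continuous_map (simplex_top k) X f"
      using assms(1,2) unfolding continuous_map_def by auto
  next
    assume "continuous_map (simplex_top k) X f"
    then have "continuous_map (simplex_top k) (delta_kelley X) f"
      by (rule continuous_map_delta_kelley)
    then show "continuous_map (simplex_top k) Y f"
      using assms(1,3) unfolding continuous_map_def by auto
  qed
  show ?thesis
    unfolding topology_eq openin_delta_kelley cm assms(1) by simp
qed

lemma same_topology_compact_Hausdorff:
  assumes "topspace X = topspace Y" "compact_space X" "Hausdorff_space Y"
    "\<And>U. openin Y U \<Longrightarrow> openin X U"
  shows "X = Y"
proof -
  have cid: "continuous_map X Y id"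
    unfolding continuous_map_def
  proof (intro conjI allI impI)
    show "id \<in> topspace X \<rightarrow> topspace Y" using assms(1) by auto
    fix U assume "openin Y U"
    moreover have "{x \<in> topspace X. id x \<in> U} = U" using openin_subset[OF \<open>openin Y U\<close>] assms(1) by auto
    ultimately show "openin X {x \<in> topspace X. id x \<in> U}" using assms(4) by simp
  qed
  have "openin Y U" if "openin X U" for U
  proof -
    have "closedin X (topspace X - U)" using that by blast
    then have "compactin X (topspace X - U)" using assms(2) closedin_compact_space by blast
    then have "compactin Y (id ` (topspace X - U))" using image_compactin cid by blast
    then have "closedin Y (topspace Y - U)" using assms(1,3) compactin_imp_closedin by auto
    moreover have "U \<subseteq> topspace Y" using that assms(1) openin_subset by blast
    ultimately show ?thesis by (metis closedin_def double_diff order_refl)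
  qed
  then show ?thesis using assms(4) topology_eq by blast
qed


lemma topspace_compact_open: "topspace (compact_open e Y) = cmaps e Y"
proof -
  let ?B = "{{f \<in> cmaps e Y. f ` K \<subseteq> U} | K U. compactin (top_of_set {0..e}) K \<and> openin Y U}"
  have "cmaps e Y = {f \<in> cmaps e Y. f ` {} \<subseteq> topspace Y}" by simp
  moreover have "compactin (top_of_set {0..e}) {}" "openin Y (topspace Y)" by auto
  ultimately have "cmaps e Y \<in> ?B" by blast
  then have "\<Union>?B = cmaps e Y" by blast
  then show ?thesis unfolding compact_open_def by simp
qed

lemma topspace_TOP: "topspace (TOP e Y) = cmaps e Y"
  by (simp add: TOP_def topspace_compact_open)

lemma finite_common_radius:
  assumes "finite F" "\<And>i. i\<in>F \<Longrightarrow> \<exists>r>0. P i r"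
    "\<And>i r r'. P i r \<Longrightarrow> 0 < r' \<Longrightarrow> r' \<le> r \<Longrightarrow> P i r'"
  shows "\<exists>r>0. \<forall>i\<in>F. P i (r::real)"
  using assms(1,2)
proof (induction F rule: finite_induct)
  case empty
  then show ?case by (intro exI[of _ 1]) auto
next
  case (insert a F)
  obtain r1 where r1: "r1>0" "\<forall>i\<in>F. P i r1" using insert by blast
  obtain r2 where r2: "r2 > 0" "P a r2" using insert by blast
  have "P i (min r1 r2)" if "i \<in> insert a F" for i
  proof (cases "i = a")
    case True then show ?thesis using assms(3)[OF r2(2), of "min r1 r2"] r1 r2 by simp
  next
    case False then have "P i r1" using that r1 by blast
    then show ?thesis using assms(3)[of i r1 "min r1 r2"] r1 r2 by simp
  qed
  then show ?case using r1 r2 by (intro exI[of _ "min r1 r2"]) simp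
qed

lemma closedin_Collect_all:
  assumes "\<And>a. a\<in>A \<Longrightarrow> continuous_map X euclideanreal (g a)" "\<And>a. a\<in>A \<Longrightarrow> closed (C a)"
  shows "closedin X {x \<in> topspace X. \<forall>a\<in>A. g a x \<in> C a}"
proof (cases "A = {}")
  case True then show ?thesis by simp
next
  case False
  have "{x \<in> topspace X. \<forall>a\<in>A. g a x \<in> C a} = (\<Inter>a\<in>A. {x \<in> topspace X. g a x \<in> C a})"
    using False by auto
  moreover have "closedin X (\<Inter>a\<in>A. {x \<in> topspace X. g a x \<in> C a})"
  proof (rule closedin_INT[OF False])
    fix a assume "a \<in> A"
    have "closedin euclideanreal (C a)" using assms(2)[OF \<open>a \<in> A\<close>] closed_closedin by blast
    then show "closedin X {x \<in> topspace X. g a x \<in> C a}"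
      using closedin_continuous_map_preimage[OF assms(1)[OF \<open>a \<in> A\<close>]] by blast
  qed
  ultimately show ?thesis by simp
qed

locale NP =
  fixes n :: nat and e :: real
  assumes e_pos: "0 < e"
begin

lemma lip_coord_aux:
  assumes "\<forall>i<n. mono_on {0..e} (\<lambda>t. \<phi> t i)" "\<forall>t\<in>{0..e}. (\<Sum>i<n. \<phi> t i) = t"
    "s \<in> {0..e}" "t \<in> {0..e}" "s \<le> t"
  shows "\<forall>i<n. 0 \<le> \<phi> t i - \<phi> s i" "(\<Sum>i<n. \<phi> t i - \<phi> s i) = t - s"
proof -
  show nn: "\<forall>i<n. 0 \<le> \<phi> t i - \<phi> s i"
  proof (intro allI impI)
    fix i assume "i < n"
    then have "mono_on {0..e} (\<lambda>t. \<phi> t i)" using assms(1) by blast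
    from mono_onD[OF this assms(3,4,5)] show "0 \<le> \<phi> t i - \<phi> s i" by simp
  qed
  show "(\<Sum>i<n. \<phi> t i - \<phi> s i) = t - s"
    using assms(2,3,4) by (simp add: sum_subtractf)
qed

lemma lip_coord:
  assumes "\<forall>i<n. mono_on {0..e} (\<lambda>t. \<phi> t i)" "\<forall>t\<in>{0..e}. (\<Sum>i<n. \<phi> t i) = t"
    "s \<in> {0..e}" "t \<in> {0..e}" "i < n"
  shows "\<bar>\<phi> t i - \<phi> s i\<bar> \<le> \<bar>t - s\<bar>"
proof -
  have *: "\<bar>\<phi> t' i - \<phi> s' i\<bar> \<le> \<bar>t' - s'\<bar>" if "s' \<in> {0..e}" "t' \<in> {0..e}" "s' \<le> t'" for s' t'
  proof -
    have nn: "\<forall>i<n. 0 \<le> \<phi> t' i - \<phi> s' i" and sm: "(\<Sum>i<n. \<phi> t' i - \<phi> s' i) = t' - s'"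
      using lip_coord_aux[OF assms(1,2) that] by auto
    have "\<phi> t' i - \<phi> s' i \<le> (\<Sum>i<n. \<phi> t' i - \<phi> s' i)"
      by (rule member_le_sum[where f="\<lambda>i. \<phi> t' i - \<phi> s' i"]) (use nn assms(5) in auto)
    then show ?thesis using nn assms(5) sm by auto
  qed
  show ?thesis
  proof (cases "s \<le> t")
    case True then show ?thesis using * assms(3,4) by blast
  next
    case False then show ?thesis using *[of t s] assms(3,4) by (simp add: abs_minus_commute)
  qed
qed

lemma N_set_iff:
  "\<phi> \<in> N_set n e \<longleftrightarrow> \<phi> \<in> extensional {0..e} \<and> (\<forall>t\<in>{0..e}. \<phi> t \<in> cubeset n)
     \<and> (\<forall>i<n. mono_on {0..e} (\<lambda>t. \<phi> t i)) \<and> (\<forall>t\<in>{0..e}. (\<Sum>i<n. \<phi> t i) = t)"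
proof
  assume "\<phi> \<in> N_set n e"
  then show "\<phi> \<in> extensional {0..e} \<and> (\<forall>t\<in>{0..e}. \<phi> t \<in> cubeset n)
     \<and> (\<forall>i<n. mono_on {0..e} (\<lambda>t. \<phi> t i)) \<and> (\<forall>t\<in>{0..e}. (\<Sum>i<n. \<phi> t i) = t)"
    unfolding N_set_def topspace_TOP cmaps_def continuous_map_def by auto
next
  assume R: "\<phi> \<in> extensional {0..e} \<and> (\<forall>t\<in>{0..e}. \<phi> t \<in> cubeset n)
     \<and> (\<forall>i<n. mono_on {0..e} (\<lambda>t. \<phi> t i)) \<and> (\<forall>t\<in>{0..e}. (\<Sum>i<n. \<phi> t i) = t)"
  have "continuous_on {0..e} (\<lambda>t. \<phi> t i)" for i
  proof (cases "i < n")
    case True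
    have "1-lipschitz_on {0..e} (\<lambda>t. \<phi> t i)"
    proof (rule lipschitz_onI)
      fix x y assume "x \<in> {0..e}" "y \<in> {0..e}"
      then show "dist (\<phi> x i) (\<phi> y i) \<le> 1 * dist x y"
        using lip_coord[of \<phi> y x i] R True by (simp add: dist_real_def)
    qed simp
    then show ?thesis by (rule lipschitz_on_continuous_on)
  next
    case False
    have "\<forall>t\<in>{0..e}. \<phi> t i = 0" using R False by (auto simp: cubeset_def)
    then show ?thesis using continuous_on_eq[OF continuous_on_const[of "{0..e}" 0]] by (metis (mono_tags))
  qed
  then have "continuous_map (top_of_set {0..e}) (cube_top n) \<phi>"
    unfolding continuous_map_into_cube using R by auto
  then show "\<phi> \<in> N_set n e"
    unfolding N_set_def topspace_TOP cmaps_def using R by auto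
qed

lemma N_set_extensional: "\<phi> \<in> N_set n e \<Longrightarrow> \<phi> \<in> extensional {0..e}"
  and N_set_cube: "\<phi> \<in> N_set n e \<Longrightarrow> t \<in> {0..e} \<Longrightarrow> \<phi> t \<in> cubeset n"
  and N_set_mono: "\<phi> \<in> N_set n e \<Longrightarrow> i < n \<Longrightarrow> mono_on {0..e} (\<lambda>t. \<phi> t i)"
  and N_set_sum: "\<phi> \<in> N_set n e \<Longrightarrow> t \<in> {0..e} \<Longrightarrow> (\<Sum>i<n. \<phi> t i) = t"
  by (auto simp: N_set_iff)

lemma N_set_out: "\<phi> \<in> N_set n e \<Longrightarrow> t \<notin> {0..e} \<Longrightarrow> \<phi> t = undefined"
  using N_set_extensional by (auto simp: extensional_def)

lemma N_set_cmaps: "N_set n e \<subseteq> cmaps e (cube_top n)"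
  unfolding N_set_def topspace_TOP by auto

definition l1 :: "(nat \<Rightarrow> real) \<Rightarrow> (nat \<Rightarrow> real) \<Rightarrow> real" where
  "l1 x y = (\<Sum>i<n. \<bar>x i - y i\<bar>)"

lemma l1_nonneg: "0 \<le> l1 x y"
  unfolding l1_def by (simp add: sum_nonneg)

lemma l1_commute: "l1 x y = l1 y x"
  unfolding l1_def by (simp add: abs_minus_commute)

lemma l1_self [simp]: "l1 x x = 0"
  unfolding l1_def by simp

lemma l1_triangle: "l1 x z \<le> l1 x y + l1 y z"
  unfolding l1_def sum.distrib[symmetric] by (rule sum_mono) linarith

lemma coord_le_l1: "i < n \<Longrightarrow> \<bar>x i - y i\<bar> \<le> l1 x y"
  unfolding l1_def by (rule member_le_sum[where f="\<lambda>i. \<bar>x i - y i\<bar>"]) auto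

lemma l1_le_n: "x \<in> cubeset n \<Longrightarrow> y \<in> cubeset n \<Longrightarrow> l1 x y \<le> n"
proof -
  assume "x \<in> cubeset n" "y \<in> cubeset n"
  then have "\<forall>i<n. \<bar>x i - y i\<bar> \<le> 1"
  proof (intro allI impI)
    fix i assume "x \<in> cubeset n" "y \<in> cubeset n" "i < n"
    then have "0 \<le> x i" "x i \<le> 1" "0 \<le> y i" "y i \<le> 1" unfolding cubeset_def by auto
    then show "\<bar>x i - y i\<bar> \<le> 1" by linarith
  qed
  then have "l1 x y \<le> (\<Sum>i<n. 1)" unfolding l1_def by (intro sum_mono) auto
  then show ?thesis by simp
qed

lemma lip:
  assumes "f \<in> N_set n e" "s \<in> {0..e}" "t \<in> {0..e}"
  shows "l1 (f s) (f t) \<le> \<bar>s - t\<bar>"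
proof -
  have *: "l1 (f s') (f t') = t' - s'" if "s' \<in> {0..e}" "t' \<in> {0..e}" "s' \<le> t'" for s' t'
  proof -
    have nn: "\<forall>i<n. 0 \<le> f t' i - f s' i" and sm: "(\<Sum>i<n. f t' i - f s' i) = t' - s'"
      using lip_coord_aux[of f s' t'] assms(1) that N_set_mono N_set_sum by auto
    have "l1 (f s') (f t') = (\<Sum>i<n. f t' i - f s' i)"
      unfolding l1_def by (rule sum.cong) (use nn in auto)
    then show ?thesis using sm by simp
  qed
  show ?thesis
  proof (cases "s \<le> t")
    case True then show ?thesis using *[of s t] assms by simp
  next
    case False then show ?thesis using *[of t s] assms by (simp add: l1_commute)
  qed
qed

definition dd :: "(real \<Rightarrow> nat \<Rightarrow> real) \<Rightarrow> (real \<Rightarrow> nat \<Rightarrow> real) \<Rightarrow> real" where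
  "dd f g = (if f \<in> N_set n e \<and> g \<in> N_set n e then (SUP t\<in>{0..e}. l1 (f t) (g t)) else 0)"

lemma dd_bdd: "f \<in> N_set n e \<Longrightarrow> g \<in> N_set n e \<Longrightarrow> bdd_above ((\<lambda>t. l1 (f t) (g t)) ` {0..e})"
proof (rule bdd_aboveI2)
  fix t assume "t \<in> {0..e}" "f \<in> N_set n e" "g \<in> N_set n e"
  then show "l1 (f t) (g t) \<le> real n" using l1_le_n N_set_cube by blast
qed

lemma dd_ge: "f \<in> N_set n e \<Longrightarrow> g \<in> N_set n e \<Longrightarrow> t \<in> {0..e} \<Longrightarrow> l1 (f t) (g t) \<le> dd f g"
proof -
  assume a: "f \<in> N_set n e" "g \<in> N_set n e" "t \<in> {0..e}"
  have "l1 (f t) (g t) \<le> (SUP t\<in>{0..e}. l1 (f t) (g t))"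
    by (rule cSUP_upper[OF a(3) dd_bdd[OF a(1,2)]])
  then show ?thesis unfolding dd_def using a by simp
qed

lemma dd_le: "f \<in> N_set n e \<Longrightarrow> g \<in> N_set n e \<Longrightarrow> (\<And>t. t \<in> {0..e} \<Longrightarrow> l1 (f t) (g t) \<le> c) \<Longrightarrow> dd f g \<le> c"
proof -
  assume a: "f \<in> N_set n e" "g \<in> N_set n e" "\<And>t. t \<in> {0..e} \<Longrightarrow> l1 (f t) (g t) \<le> c"
  have "(SUP t\<in>{0..e}. l1 (f t) (g t)) \<le> c"
    by (rule cSUP_least) (use e_pos a(3) in auto)
  then show ?thesis unfolding dd_def using a by simp
qed

lemma dd_nonneg: "0 \<le> dd f g"
proof (cases "f \<in> N_set n e \<and> g \<in> N_set n e")
  case True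
  then have "l1 (f 0) (g 0) \<le> dd f g" using dd_ge e_pos by simp
  then show ?thesis using l1_nonneg order_trans by blast
next
  case False then show ?thesis by (auto simp: dd_def)
qed

lemma coord_le_dd:
  assumes "f \<in> N_set n e" "g \<in> N_set n e"
  shows "\<bar>f t i - g t i\<bar> \<le> dd f g"
proof (cases "t \<in> {0..e}")
  case True
  show ?thesis
  proof (cases "i < n")
    case True
    then show ?thesis using coord_le_l1 dd_ge[OF assms \<open>t \<in> {0..e}\<close>] order_trans by blast
  next
    case False
    then have "f t i = 0" "g t i = 0" using N_set_cube[OF _ \<open>t \<in> {0..e}\<close>] assms by (auto simp: cubeset_def)
    then show ?thesis using dd_nonneg by simp
  qed
next
  case False
  then show ?thesis using N_set_out assms dd_nonneg by simp
qed

sublocale Metric_space "N_set n e" dd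
proof
  show "0 \<le> dd x y" for x y by (rule dd_nonneg)
  show "dd x y = dd y x" for x y
  proof -
    have "(\<lambda>t. l1 (x t) (y t)) = (\<lambda>t. l1 (y t) (x t))" by (rule ext) (rule l1_commute)
    then have "(SUP t\<in>{0..e}. l1 (x t) (y t)) = (SUP t\<in>{0..e}. l1 (y t) (x t))" by metis
    then show ?thesis unfolding dd_def by auto
  qed
  show "dd x y = 0 \<longleftrightarrow> x = y" if "x \<in> N_set n e" "y \<in> N_set n e" for x y
  proof
    assume "dd x y = 0"
    then have "\<bar>x t i - y t i\<bar> \<le> 0" for t i using coord_le_dd[OF that, of t i] by simp
    then have "\<forall>t i. x t i = y t i" by simp
    then show "x = y" by (intro ext) auto
  next
    assume "x = y"
    then show "dd x y = 0" using that e_pos unfolding dd_def by simp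
  qed
  show "dd x z \<le> dd x y + dd y z" if "x \<in> N_set n e" "y \<in> N_set n e" "z \<in> N_set n e" for x y z
  proof (rule dd_le)
    fix t assume "t \<in> {0..e}"
    then show "l1 (x t) (z t) \<le> dd x y + dd y z"
      using l1_triangle[where x="x t" and y="y t" and z="z t"] dd_ge[OF that(1,2)] dd_ge[OF that(2,3)] by fastforce
  qed (use that in auto)
qed

end


context NP
begin

abbreviation PI where "PI \<equiv> product_topology (\<lambda>_. cube_top n) {0..e}"

definition PT where "PT = subtopology PI (N_set n e)"
definition CT where "CT = subtopology (compact_open e (cube_top n)) (N_set n e)"

lemma N_set_PiE: "N_set n e \<subseteq> topspace PI"
  using N_set_extensional N_set_cube by (force simp: PiE_iff)

lemma topspace_PT: "topspace PT = N_set n e"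
  unfolding PT_def using N_set_PiE by auto

lemma topspace_CT: "topspace CT = N_set n e"
  unfolding CT_def using N_set_cmaps by (auto simp: topspace_compact_open)

lemma cont_eval_PI: "t \<in> {0..e} \<Longrightarrow> continuous_map PI euclideanreal (\<lambda>f. f t i)"
  using continuous_map_compose[OF continuous_map_product_projection[of t "{0..e}" "\<lambda>_. cube_top n"]
      continuous_map_cube_coord[of n i]]
  by (simp add: o_def)

lemma cont_eval_PT: "t \<in> {0..e} \<Longrightarrow> continuous_map PT euclideanreal (\<lambda>f. f t i)"
  unfolding PT_def by (rule continuous_map_from_subtopology) (rule cont_eval_PI)

lemma cont_l1_PT: "t \<in> {0..e} \<Longrightarrow> continuous_map PT euclideanreal (\<lambda>f. l1 (f t) y)"
  unfolding l1_def
  by (intro continuous_map_sum continuous_map_real_abs continuous_map_diff cont_eval_PT) auto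

lemma open_l1_PT:
  assumes "t \<in> {0..e}"
  shows "openin PT {g \<in> N_set n e. l1 (g t) y < r}"
proof -
  have "openin PT {g \<in> topspace PT. l1 (g t) y \<in> {..<r}}"
    by (rule openin_continuous_map_preimage[OF cont_l1_PT[OF assms]]) simp
  then show ?thesis by (simp add: topspace_PT)
qed

lemma net:
  assumes K: "compact K" "K \<subseteq> {0..e}" and f: "f \<in> N_set n e" and \<delta>: "\<And>t. t \<in> K \<Longrightarrow> 0 < \<delta> t"
  shows "\<exists>W. openin PT W \<and> f \<in> W \<and> (\<forall>g\<in>W. \<forall>s\<in>K. \<exists>t\<in>K.
            l1 (g s) (f t) < 2 * \<delta> t \<and> l1 (f s) (f t) < \<delta> t)"
proof -
  have "K \<subseteq> (\<Union>t\<in>K. ball t (\<delta> t))" using \<delta> by force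
  then obtain T where T: "T \<subseteq> K" "finite T" "K \<subseteq> (\<Union>t\<in>T. ball t (\<delta> t))"
    using compactE_image[OF K(1), of K "\<lambda>t. ball t (\<delta> t)"] by auto
  define W where "W = (\<Inter>t\<in>T. {g \<in> N_set n e. l1 (g t) (f t) < \<delta> t}) \<inter> topspace PT"
  have "openin PT W"
    unfolding W_def by (rule openin_INT[OF T(2)]) (use T K open_l1_PT in blast)
  moreover have "f \<in> W" unfolding W_def using f T \<delta> by (auto simp: topspace_PT)
  moreover have "\<exists>t\<in>K. l1 (g s) (f t) < 2 * \<delta> t \<and> l1 (f s) (f t) < \<delta> t" if "g \<in> W" "s \<in> K" for g s
  proof -
    obtain t where t: "t \<in> T" "dist s t < \<delta> t" using T(3) \<open>s \<in> K\<close> by (auto simp: dist_commute)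
    have g: "g \<in> N_set n e" using that(1) unfolding W_def topspace_PT by blast
    have gt: "l1 (g t) (f t) < \<delta> t" using that(1) t(1) unfolding W_def by blast
    have st: "s \<in> {0..e}" "t \<in> {0..e}" using that(2) t(1) T(1) K(2) by auto
    have "l1 (g s) (f t) \<le> l1 (g s) (g t) + l1 (g t) (f t)" by (rule l1_triangle)
    also have "\<dots> < \<bar>s - t\<bar> + \<delta> t" using lip[OF g st] gt by simp
    also have "\<dots> < 2 * \<delta> t" using t(2) by (simp add: dist_real_def)
    finally have 1: "l1 (g s) (f t) < 2 * \<delta> t" .
    have "l1 (f s) (f t) < \<delta> t" using lip[OF f st] t(2) by (simp add: dist_real_def)
    then show ?thesis using 1 t(1) T(1) by blast
  qed
  ultimately show ?thesis by blast
qed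

lemma cube_open_ball:
  assumes "openin (cube_top n) V" "x \<in> V"
  shows "\<exists>r>0. \<forall>y\<in>cubeset n. l1 y x < r \<longrightarrow> y \<in> V"
proof -
  obtain V' where V': "openin (powertop_real UNIV) V'" "V = V' \<inter> cubeset n"
    using assms(1) unfolding cube_top_alt openin_subtopology by blast
  have xc: "x \<in> cubeset n" using assms V' by blast
  obtain U where U: "finite {i. U i \<noteq> UNIV}" "\<forall>i. open (U i)" "x \<in> PiE UNIV U" "PiE UNIV U \<subseteq> V'"
    using V'(1) assms(2) V'(2) unfolding openin_product_topology_alt by auto
  have "\<exists>r>0. ball (x i) r \<subseteq> U i" if "i \<in> {i. U i \<noteq> UNIV}" for i
  proof -
    have "x i \<in> U i" using U(3) by (auto simp: PiE_UNIV_domain)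
    then show ?thesis using U(2) open_contains_ball_eq by blast
  qed
  then obtain r where r: "r > 0" "\<forall>i\<in>{i. U i \<noteq> UNIV}. ball (x i) r \<subseteq> U i"
    using finite_common_radius[OF U(1), of "\<lambda>i r. ball (x i) r \<subseteq> U i"] by fastforce
  have "y \<in> V" if "y \<in> cubeset n" "l1 y x < r" for y
  proof -
    have "y i \<in> U i" for i
    proof (cases "U i = UNIV")
      case False
      have "\<bar>y i - x i\<bar> < r"
      proof (cases "i < n")
        case True then show ?thesis using coord_le_l1[of i y x] that by simp
      next
        case False then show ?thesis using that(1) xc r(1) by (simp add: cubeset_def)
      qed
      then have "y i \<in> ball (x i) r" by (simp add: dist_real_def)
      then show ?thesis using r(2) False by blast
    qed simp
    then have "y \<in> V'" using U(4) by (auto simp: PiE_UNIV_domain)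
    then show ?thesis using V'(2) that(1) by blast
  qed
  then show ?thesis using r(1) by blast
qed

lemma CT_open_imp_PT_open:
  assumes "openin CT W"
  shows "openin PT W"
proof -
  let ?B = "{{f \<in> cmaps e (cube_top n). f ` K \<subseteq> U} | K U. compactin (top_of_set {0..e}) K \<and> openin (cube_top n) U}"
  have B: "openin PT (id -` U \<inter> topspace PT)" if "U \<in> ?B" for U
  proof -
    obtain K V where KV: "U = {f \<in> cmaps e (cube_top n). f ` K \<subseteq> V}" "compactin (top_of_set {0..e}) K"
      "openin (cube_top n) V" using \<open>U \<in> ?B\<close> by blast
    have K: "compact K" "K \<subseteq> {0..e}" using KV(2) by (auto simp: compactin_subtopology)
    have "\<exists>W. openin PT W \<and> f \<in> W \<and> W \<subseteq> U \<inter> N_set n e" if f: "f \<in> U \<inter> N_set n e" for f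
    proof -
      have "\<forall>t\<in>K. \<exists>d. 0 < d \<and> (\<forall>y\<in>cubeset n. l1 y (f t) < 2 * d \<longrightarrow> y \<in> V)"
      proof
        fix t assume "t \<in> K"
        then have "f t \<in> V" using f KV(1) by blast
        then obtain r where "r > 0" "\<forall>y\<in>cubeset n. l1 y (f t) < r \<longrightarrow> y \<in> V"
          using cube_open_ball[OF KV(3)] by blast
        then show "\<exists>d. 0 < d \<and> (\<forall>y\<in>cubeset n. l1 y (f t) < 2 * d \<longrightarrow> y \<in> V)"
          by (intro exI[of _ "r/2"]) auto
      qed
      then obtain \<delta> where \<delta>: "\<forall>t\<in>K. 0 < \<delta> t \<and> (\<forall>y\<in>cubeset n. l1 y (f t) < 2 * \<delta> t \<longrightarrow> y \<in> V)"
        by (metis (no_types) bchoice)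
      obtain W where W: "openin PT W" "f \<in> W" "\<forall>g\<in>W. \<forall>s\<in>K. \<exists>t\<in>K. l1 (g s) (f t) < 2 * \<delta> t \<and> l1 (f s) (f t) < \<delta> t"
        using net[OF K, of f \<delta>] f \<delta> by blast
      have "W \<subseteq> U \<inter> N_set n e"
      proof
        fix g assume "g \<in> W"
        then have g: "g \<in> N_set n e" using W(1) openin_subset topspace_PT by blast
        have "g ` K \<subseteq> V"
        proof
          fix y assume "y \<in> g ` K"
          then obtain s where s: "s \<in> K" "y = g s" by blast
          obtain t where "t \<in> K" "l1 (g s) (f t) < 2 * \<delta> t" using W(3) \<open>g \<in> W\<close> s(1) by blast
          moreover have "g s \<in> cubeset n" using N_set_cube[OF g] s(1) K(2) by blast
          ultimately show "y \<in> V" using \<delta> s(2) by blast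
        qed
        then show "g \<in> U \<inter> N_set n e" using g N_set_cmaps KV(1) by blast
      qed
      then show ?thesis using W by blast
    qed
    then have "openin PT (U \<inter> N_set n e)" by (subst openin_subopen) blast
    then show ?thesis by (simp add: topspace_PT)
  qed
  have "\<Union>?B \<inter> cmaps e (cube_top n) = cmaps e (cube_top n)"
    using topspace_compact_open[of e "cube_top n"] unfolding compact_open_def by simp
  then have "cmaps e (cube_top n) \<subseteq> \<Union>?B" by blast
  then have "continuous_map PT (topology_generated_by ?B) id"
    using B N_set_cmaps topspace_PT by (intro continuous_on_generated_topo) auto
  then have "continuous_map PT (compact_open e (cube_top n)) id"
    unfolding compact_open_def continuous_map_in_subtopology using N_set_cmaps topspace_PT by auto
  then have "continuous_map PT CT id"
    unfolding CT_def continuous_map_in_subtopology using topspace_PT by auto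
  then have "openin PT {x \<in> topspace PT. id x \<in> W}"
    using assms openin_continuous_map_preimage by blast
  moreover have "W \<subseteq> topspace PT" using openin_subset[OF assms] topspace_CT topspace_PT by simp
  then have "{x \<in> topspace PT. id x \<in> W} = W" by auto
  ultimately show ?thesis by simp
qed

end


context NP
begin

lemma Hausdorff_CT: "Hausdorff_space CT"
  unfolding Hausdorff_space_def
proof (intro allI impI)
  fix f g assume fg0: "f \<in> topspace CT \<and> g \<in> topspace CT \<and> f \<noteq> g"
  then have fg: "f \<in> N_set n e" "g \<in> N_set n e" "f \<noteq> g" using topspace_CT by auto
  obtain t where t: "t \<in> {0..e}" "f t \<noteq> g t"
    using extensionalityI[OF N_set_extensional[OF fg(1)] N_set_extensional[OF fg(2)]] fg(3) by blast
  have "f t \<in> topspace (cube_top n)" "g t \<in> topspace (cube_top n)"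
    using N_set_cube fg t by auto
  moreover have H: "\<And>x y. x \<in> topspace (cube_top n) \<Longrightarrow> y \<in> topspace (cube_top n) \<Longrightarrow> x \<noteq> y \<Longrightarrow>
     \<exists>U V. openin (cube_top n) U \<and> openin (cube_top n) V \<and> x \<in> U \<and> y \<in> V \<and> disjnt U V"
    using Hausdorff_cube unfolding Hausdorff_space_def by blast
  ultimately obtain U V where UV: "openin (cube_top n) U" "openin (cube_top n) V" "f t \<in> U" "g t \<in> V" "disjnt U V"
    using t(2) by blast
  define A where "A = (\<lambda>U. {h \<in> cmaps e (cube_top n). h ` {t} \<subseteq> U} \<inter> N_set n e)"
  have opA: "openin CT (A U)" if "openin (cube_top n) U" for U
  proof -
    let ?B = "{{f \<in> cmaps e (cube_top n). f ` K \<subseteq> U} | K U. compactin (top_of_set {0..e}) K \<and> openin (cube_top n) U}"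
    have "compactin (top_of_set {0..e}) {t}" using t(1) by simp
    then have "{h \<in> cmaps e (cube_top n). h ` {t} \<subseteq> U} \<in> ?B" using that by blast
    then have "openin (topology_generated_by ?B) {h \<in> cmaps e (cube_top n). h ` {t} \<subseteq> U}"
      by (rule topology_generated_by_Basis)
    then have "openin (compact_open e (cube_top n)) ({h \<in> cmaps e (cube_top n). h ` {t} \<subseteq> U} \<inter> cmaps e (cube_top n))"
      unfolding compact_open_def by (rule openin_subtopology_Int)
    then have "openin (compact_open e (cube_top n)) {h \<in> cmaps e (cube_top n). h ` {t} \<subseteq> U}"
      by (simp add: Int_absorb2 subset_iff)
    then show ?thesis unfolding A_def CT_def by (rule openin_subtopology_Int)
  qed
  have "f \<in> A U" "g \<in> A V" using fg UV N_set_cmaps unfolding A_def by auto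
  moreover have "disjnt (A U) (A V)" using UV(5) unfolding A_def disjnt_def by auto
  ultimately show "\<exists>U V. openin CT U \<and> openin CT V \<and> f \<in> U \<and> g \<in> V \<and> disjnt U V"
    using opA UV(1,2) by blast
qed

lemma closedin_Nset: "closedin PI (N_set n e)"
proof -
  define A where "A = {(i,s,t). i < n \<and> s \<in> {0..e} \<and> t \<in> {0..e} \<and> s \<le> t}"
  define g where "g = (\<lambda>a (f::real \<Rightarrow> nat \<Rightarrow> real). case a of (i,s,t) \<Rightarrow> f t i - f s i)"
  have c1: "closedin PI {f \<in> topspace PI. \<forall>a\<in>A. g a f \<in> {0..}}"
  proof (rule closedin_Collect_all)
    fix a assume "a \<in> A"
    then obtain i s t where a: "a = (i,s,t)" "s \<in> {0..e}" "t \<in> {0..e}" unfolding A_def by blast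
    show "continuous_map PI euclideanreal (g a)"
    proof -
      have "g a = (\<lambda>f. f t i - f s i)" unfolding a g_def by simp
      then show ?thesis using continuous_map_diff[OF cont_eval_PI[OF a(3)] cont_eval_PI[OF a(2)]] by simp
    qed
  qed simp
  have c2: "closedin PI {f \<in> topspace PI. \<forall>t\<in>{0..e}. (\<lambda>f. (\<Sum>i<n. f t i) - t) f \<in> {0}}"
  proof (rule closedin_Collect_all)
    fix t :: real assume "t \<in> {0..e}"
    then show "continuous_map PI euclideanreal (\<lambda>f. (\<Sum>i<n. f t i) - t)"
      by (intro continuous_map_diff continuous_map_sum cont_eval_PI) auto
  qed simp
  have "N_set n e = {f \<in> topspace PI. \<forall>a\<in>A. g a f \<in> {0..}} \<inter>
     {f \<in> topspace PI. \<forall>t\<in>{0..e}. (\<lambda>f. (\<Sum>i<n. f t i) - t) f \<in> {0}}"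
  proof (rule Set.set_eqI)
    fix f
    have "(\<forall>i<n. mono_on {0..e} (\<lambda>t. f t i)) \<longleftrightarrow> (\<forall>a\<in>A. g a f \<in> {0..})"
      unfolding mono_on_def A_def g_def by auto
    then show "f \<in> N_set n e \<longleftrightarrow> f \<in> {f \<in> topspace PI. \<forall>a\<in>A. g a f \<in> {0..}} \<inter>
     {f \<in> topspace PI. \<forall>t\<in>{0..e}. (\<lambda>f. (\<Sum>i<n. f t i) - t) f \<in> {0}}"
      unfolding N_set_iff by (auto simp: PiE_iff)
  qed
  then show ?thesis using c1 c2 by (simp add: closedin_Int)
qed

lemma compact_PT: "compact_space PT"
proof -
  have "compact_space PI" by (simp add: compact_space_product_topology compact_cube)
  then have "compactin PI (N_set n e)" using closedin_Nset closedin_compact_space by blast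
  then show ?thesis unfolding PT_def by (rule compact_space_subtopology)
qed

lemma PT_eq_CT: "PT = CT"
  by (rule same_topology_compact_Hausdorff)
     (auto simp: topspace_PT topspace_CT compact_PT Hausdorff_CT CT_open_imp_PT_open)

lemma PT_eq_M: "PT = mtopology"
proof (rule same_topology_compact_Hausdorff)
  show "topspace PT = topspace mtopology" by (simp add: topspace_PT)
  show "compact_space PT" by (rule compact_PT)
  show "Hausdorff_space mtopology" by (rule Hausdorff_space_mtopology)
  fix U assume U: "openin mtopology U"
  show "openin PT U"
  proof (subst openin_subopen, intro ballI)
    fix f assume "f \<in> U"
    obtain r where r: "r > 0" "mball f r \<subseteq> U" using U \<open>f \<in> U\<close> openin_mtopology by blast
    have f: "f \<in> N_set n e" using U \<open>f \<in> U\<close> openin_mtopology by blast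
    obtain W where W: "openin PT W" "f \<in> W"
      "\<forall>g\<in>W. \<forall>s\<in>{0..e}. \<exists>t\<in>{0..e}. l1 (g s) (f t) < 2 * (r/4) \<and> l1 (f s) (f t) < r/4"
      using net[OF compact_Icc order_refl f, of "\<lambda>_. r/4"] r by auto
    have "W \<subseteq> U"
    proof
      fix g assume "g \<in> W"
      then have g: "g \<in> N_set n e" using W(1) openin_subset topspace_PT by blast
      have "dd f g \<le> 3 * r / 4"
      proof (rule dd_le[OF f g])
        fix s assume "s \<in> {0..e}"
        then obtain t where "l1 (g s) (f t) < 2 * (r/4)" "l1 (f s) (f t) < r/4"
          using W(3) \<open>g \<in> W\<close> by blast
        moreover have "l1 (f s) (g s) \<le> l1 (f s) (f t) + l1 (f t) (g s)" by (rule l1_triangle)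
        ultimately show "l1 (f s) (g s) \<le> 3 * r / 4" by (simp add: l1_commute[of "f t"])
      qed
      then have "g \<in> mball f r" using f g r(1) by simp
      then show "g \<in> U" using r(2) by blast
    qed
    then show "\<exists>T. openin PT T \<and> f \<in> T \<and> T \<subseteq> U" using W by blast
  qed
qed

lemma N_top_eq_CT: "N_top n e = delta_kelley CT"
  unfolding N_top_def TOP_def
proof (rule delta_kelley_cong)
  let ?CO = "compact_open e (cube_top n)"
  show "topspace (subtopology (delta_kelley ?CO) (N_set n e)) = topspace CT"
    using topspace_CT N_set_cmaps by (auto simp: topspace_compact_open)
  fix U
  show "openin CT U \<Longrightarrow> openin (subtopology (delta_kelley ?CO) (N_set n e)) U"
    unfolding CT_def openin_subtopology using openin_imp_delta_kelley by blast
  assume "openin (subtopology (delta_kelley ?CO) (N_set n e)) U"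
  then obtain V where V: "openin (delta_kelley ?CO) V" "U = V \<inter> N_set n e"
    unfolding openin_subtopology by blast
  show "openin (delta_kelley CT) U"
    unfolding openin_delta_kelley
  proof (intro conjI allI impI)
    show "U \<subseteq> topspace CT" using V(2) topspace_CT by auto
    fix k f assume f: "continuous_map (simplex_top k) CT f"
    then have f1: "continuous_map (simplex_top k) ?CO f" and f2: "f \<in> topspace (simplex_top k) \<rightarrow> N_set n e"
      unfolding CT_def continuous_map_in_subtopology by auto
    have "openin (simplex_top k) {x \<in> topspace (simplex_top k). f x \<in> V}"
      using V(1) f1 unfolding openin_delta_kelley by blast
    moreover have "{x \<in> topspace (simplex_top k). f x \<in> V} = {x \<in> topspace (simplex_top k). f x \<in> U}"
      using f2 V(2) by auto
    ultimately show "openin (simplex_top k) {x \<in> topspace (simplex_top k). f x \<in> U}" by simp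
  qed
qed

end


definition wid :: "nat \<Rightarrow> real" where "wid m = (1/2)^m / 4"
definition cen :: "nat \<Rightarrow> real" where "cen m = 3 * (1/2)^m / 4"
definition tau :: "nat \<Rightarrow> real \<Rightarrow> real" where "tau m s = max 0 (1 - \<bar>s - cen m\<bar> / wid m)"

lemma wid_pos: "0 < wid m" by (simp add: wid_def)

lemma tau_nonneg: "0 \<le> tau m s" by (simp add: tau_def)

lemma tau_le1: "tau m s \<le> 1"
proof -
  have "0 \<le> \<bar>s - cen m\<bar> / wid m" using wid_pos[of m] by simp
  then show ?thesis by (simp add: tau_def)
qed

lemma tau_cen: "tau m (cen m) = 1" by (simp add: tau_def)

lemma tau_zero: "tau m 0 = 0"
proof -
  have "\<bar>0 - cen m\<bar> / wid m = 3" using wid_pos[of m] by (simp add: cen_def wid_def)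
  then show ?thesis by (simp add: tau_def)
qed

lemma tau_cont: "continuous_on UNIV (tau m)"
  unfolding tau_def by (intro continuous_intros) (simp add: wid_def)

lemma tau_supp: "tau m s \<noteq> 0 \<Longrightarrow> (1/2)^m / 2 < s \<and> s < (1/2)^m"
proof -
  assume "tau m s \<noteq> 0"
  then have "\<bar>s - cen m\<bar> / wid m < 1" by (auto simp: tau_def split: if_splits)
  then have "\<bar>s - cen m\<bar> < wid m" using wid_pos[of m] by (simp add: divide_less_eq)
  then have "s - cen m < wid m" "cen m - s < wid m" by (auto simp: abs_less_iff)
  then show ?thesis unfolding cen_def wid_def by linarith
qed

lemma tau_disj: "tau m s \<noteq> 0 \<Longrightarrow> tau m' s \<noteq> 0 \<Longrightarrow> m = m'"
proof (rule ccontr)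
  assume a: "tau m s \<noteq> 0" "tau m' s \<noteq> 0" "m \<noteq> m'"
  have *: False if "tau p s \<noteq> 0" "tau q s \<noteq> 0" "p < q" for p q
  proof -
    have "(1/2::real)^q \<le> (1/2)^(Suc p)" by (rule power_decreasing) (use that in auto)
    then show False using tau_supp[OF that(1)] tau_supp[OF that(2)] by simp
  qed
  show False using a *[of m m'] *[of m' m] by (cases "m < m'") auto
qed

lemma suminf_single_tau:
  assumes "\<And>m'. m' \<noteq> m \<Longrightarrow> tau m' s = 0"
  shows "suminf (\<lambda>m'. tau m' s * b m') = tau m s * b m"
proof -
  have "(\<lambda>m'. tau m' s * b m') = (\<lambda>m'. if m' = m then tau m' s * b m' else 0)"
    by (rule ext) (use assms in auto)
  then show ?thesis using sums_unique[OF sums_single[of m "\<lambda>m'. tau m' s * b m'"]] by simp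
qed

lemma conv_bounds:
  fixes x y lam :: real
  assumes "0 \<le> lam" "lam \<le> 1"
  shows "min x y \<le> x + lam * (y - x)" "x + lam * (y - x) \<le> max x y"
proof -
  have A: "x + lam * (y - x) = (1 - lam) * x + lam * y" by (simp add: algebra_simps)
  have "(1 - lam) * min x y \<le> (1 - lam) * x" "lam * min x y \<le> lam * y"
    using assms by (auto intro: mult_left_mono)
  moreover have "min x y = (1 - lam) * min x y + lam * min x y" by (simp add: algebra_simps)
  ultimately show "min x y \<le> x + lam * (y - x)" unfolding A by linarith
  have "(1 - lam) * x \<le> (1 - lam) * max x y" "lam * y \<le> lam * max x y"
    using assms by (auto intro: mult_left_mono)
  moreover have "max x y = (1 - lam) * max x y + lam * max x y" by (simp add: algebra_simps)
  ultimately show "x + lam * (y - x) \<le> max x y" unfolding A by linarith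
qed

context NP
begin

definition cc :: "real \<Rightarrow> (real \<Rightarrow> nat \<Rightarrow> real) \<Rightarrow> (real \<Rightarrow> nat \<Rightarrow> real) \<Rightarrow> (real \<Rightarrow> nat \<Rightarrow> real)" where
  "cc lam l a = (\<lambda>t i. l t i + lam * (a t i - l t i))"

lemma cc_N_set:
  assumes l: "l \<in> N_set n e" and a: "a \<in> N_set n e" and lam: "0 \<le> lam" "lam \<le> 1"
  shows "cc lam l a \<in> N_set n e"
  unfolding N_set_iff
proof (intro conjI ballI allI impI)
  show "cc lam l a \<in> extensional {0..e}"
    unfolding extensional_def cc_def using N_set_out[OF l] N_set_out[OF a] by auto
  fix t assume t: "t \<in> {0..e}"
  have lt: "l t \<in> cubeset n" and at: "a t \<in> cubeset n" using N_set_cube l a t by auto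
  show "cc lam l a t \<in> cubeset n"
    unfolding cubeset_def cc_def
  proof (intro CollectI conjI allI impI)
    fix i assume "n \<le> i" then show "l t i + lam * (a t i - l t i) = 0" using lt at by (simp add: cubeset_def)
  next
    fix i assume "i < n"
    then have "0 \<le> l t i" "l t i \<le> 1" "0 \<le> a t i" "a t i \<le> 1" using lt at by (auto simp: cubeset_def)
    then show "0 \<le> l t i + lam * (a t i - l t i)" "l t i + lam * (a t i - l t i) \<le> 1"
      using conv_bounds[OF lam, of "l t i" "a t i"] by linarith+
  qed
  show "(\<Sum>i<n. cc lam l a t i) = t"
    unfolding cc_def using N_set_sum[OF l t] N_set_sum[OF a t]
    by (simp add: sum.distrib sum_distrib_left[symmetric] sum_subtractf)
next
  fix i assume "i < n"
  show "mono_on {0..e} (\<lambda>t. cc lam l a t i)"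
  proof (rule mono_onI)
    fix r s assume rs: "r \<in> {0..e}" "s \<in> {0..e}" "r \<le> s"
    have "l r i \<le> l s i" "a r i \<le> a s i"
      using mono_onD[OF N_set_mono[OF l \<open>i < n\<close>] rs] mono_onD[OF N_set_mono[OF a \<open>i < n\<close>] rs] by auto
    then have "(1 - lam) * l r i \<le> (1 - lam) * l s i" "lam * a r i \<le> lam * a s i"
      using lam by (auto intro: mult_left_mono)
    then show "cc lam l a r i \<le> cc lam l a s i" unfolding cc_def by (simp add: algebra_simps)
  qed
qed

lemma DG:
  assumes S: "S \<subseteq> N_set n e"
    and star: "\<And>l. l \<in> S \<Longrightarrow> \<exists>\<epsilon>>0. \<forall>a\<in>S. dd a l < \<epsilon> \<longrightarrow> (\<forall>lam\<in>{0..1}. cc lam l a \<in> S)"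
  shows "delta_generated (subtopology mtopology S)"
  unfolding delta_generated_def topology_eq
proof (intro allI iffI)
  let ?X = "subtopology mtopology S"
  fix U
  show "openin ?X U \<Longrightarrow> openin (delta_kelley ?X) U" by (rule openin_imp_delta_kelley)
  assume U: "openin (delta_kelley ?X) U"
  have topX: "topspace ?X = S" using S by auto
  have US: "U \<subseteq> S" using U topX unfolding openin_delta_kelley by simp
  have Ucont: "openin (simplex_top k) {x \<in> topspace (simplex_top k). f x \<in> U}"
    if "continuous_map (simplex_top k) ?X f" for k f
    using U that unfolding openin_delta_kelley by blast
  have ball: "\<exists>r>0. mball l r \<inter> S \<subseteq> U" if lU: "l \<in> U" for l
  proof (rule ccontr)
    assume neg: "\<not> (\<exists>r>0. mball l r \<inter> S \<subseteq> U)"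
    have lS: "l \<in> S" using US lU by blast
    have lN: "l \<in> N_set n e" using lS S by blast
    obtain \<epsilon> where \<epsilon>: "\<epsilon> > 0" "\<forall>a\<in>S. dd a l < \<epsilon> \<longrightarrow> (\<forall>lam\<in>{0..1}. cc lam l a \<in> S)"
      using star[OF lS] by blast
    have "\<forall>m. \<exists>a. a \<in> S \<and> dd l a < min \<epsilon> ((1/2)^m) \<and> a \<notin> U"
    proof
      fix m :: nat
      have "min \<epsilon> ((1/2)^m) > 0" using \<epsilon> by simp
      then have "\<not> (mball l (min \<epsilon> ((1/2)^m)) \<inter> S \<subseteq> U)" using neg by blast
      then show "\<exists>a. a \<in> S \<and> dd l a < min \<epsilon> ((1/2)^m) \<and> a \<notin> U" by auto
    qed
    then obtain a where a: "\<And>m. a m \<in> S" "\<And>m. dd l (a m) < min \<epsilon> ((1/2)^m)" "\<And>m. a m \<notin> U"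
      by metis
    have aN: "a m \<in> N_set n e" for m using a(1) S by blast
    define \<gamma> where "\<gamma> = (\<lambda>s t i. l t i + suminf (\<lambda>m. tau m s * (a m t i - l t i)))"
    have bound: "\<bar>a m t i - l t i\<bar> \<le> (1/2)^m" for m t i
    proof -
      have "\<bar>a m t i - l t i\<bar> \<le> dd (a m) l" by (rule coord_le_dd[OF aN lN])
      also have "\<dots> = dd l (a m)" by (rule commute)
      also have "\<dots> \<le> (1/2)^m" using a(2)[of m] by simp
      finally show ?thesis .
    qed
    have \<gamma>0: "\<gamma> 0 = l" unfolding \<gamma>_def by (simp add: tau_zero)
    have \<gamma>c: "\<gamma> (cen m) = a m" for m
    proof -
      have "\<And>m'. m' \<noteq> m \<Longrightarrow> tau m' (cen m) = 0" using tau_disj[of m "cen m"] tau_cen[of m] by auto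
      then have "suminf (\<lambda>m'. tau m' (cen m) * (a m' t i - l t i)) = tau m (cen m) * (a m t i - l t i)" for t i
        by (rule suminf_single_tau)
      then have "\<gamma> (cen m) = (\<lambda>t i. l t i + tau m (cen m) * (a m t i - l t i))"
        unfolding \<gamma>_def by simp
      then show ?thesis by (simp add: tau_cen)
    qed
    have \<gamma>S: "\<gamma> s \<in> S" for s
    proof (cases "\<exists>m. tau m s \<noteq> 0")
      case True
      then obtain m where m: "tau m s \<noteq> 0" by blast
      then have "\<And>m'. m' \<noteq> m \<Longrightarrow> tau m' s = 0" using tau_disj by blast
      then have "suminf (\<lambda>m'. tau m' s * (a m' t i - l t i)) = tau m s * (a m t i - l t i)" for t i
        by (rule suminf_single_tau)
      then have "\<gamma> s = cc (tau m s) l (a m)"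
        unfolding \<gamma>_def cc_def by simp
      moreover have "dd (a m) l < \<epsilon>" using a(2)[of m] commute by simp
      ultimately show ?thesis using \<epsilon>(2) a(1) tau_nonneg tau_le1 by auto
    next
      case False
      then have "\<gamma> s = l" unfolding \<gamma>_def by (intro ext) simp
      then show ?thesis using lS by simp
    qed
    have \<gamma>cont: "continuous_on UNIV (\<lambda>s. \<gamma> s t i)" for t i
    proof -
      have "uniform_limit UNIV (\<lambda>N s. \<Sum>m<N. tau m s * (a m t i - l t i)) (\<lambda>s. suminf (\<lambda>m. tau m s * (a m t i - l t i))) sequentially"
      proof (rule Weierstrass_m_test[where M="\<lambda>m. (1/2)^m"])
        fix m s
        have "\<bar>tau m s\<bar> * \<bar>a m t i - l t i\<bar> \<le> 1 * (1/2)^m"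
          using tau_nonneg[of m s] tau_le1[of m s] bound[of m t i] by (intro mult_mono) auto
        then show "norm (tau m s * (a m t i - l t i)) \<le> (1/2)^m" by (simp add: abs_mult)
      next
        show "summable (\<lambda>m. (1/2::real)^m)" by (rule summable_geometric) simp
      qed
      moreover have "\<forall>\<^sub>F N in sequentially. continuous_on UNIV (\<lambda>s. \<Sum>m<N. tau m s * (a m t i - l t i))"
        by (intro always_eventually allI continuous_on_sum continuous_on_mult_right tau_cont)
      ultimately have "continuous_on UNIV (\<lambda>s. suminf (\<lambda>m. tau m s * (a m t i - l t i)))"
        using uniform_limit_theorem by fastforce
      then show ?thesis unfolding \<gamma>_def by (intro continuous_on_add continuous_on_const)
    qed
    have \<gamma>map: "continuous_map euclideanreal ?X \<gamma>"
    proof -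
      have X: "?X = subtopology PI S"
        unfolding PT_eq_M[symmetric] PT_def subtopology_subtopology using S by (simp add: Int_absorb1)
      have "continuous_map euclideanreal PI \<gamma>"
        unfolding continuous_map_componentwise
      proof (intro conjI ballI)
        show "\<gamma> ` topspace euclideanreal \<subseteq> extensional {0..e}"
          using \<gamma>S S N_set_extensional by blast
        fix t assume t: "t \<in> {0..e}"
        show "continuous_map euclideanreal (cube_top n) (\<lambda>s. \<gamma> s t)"
        proof -
          have "\<gamma> s t \<in> cubeset n" for s using N_set_cube[OF _ t] \<gamma>S S by blast
          then show ?thesis unfolding continuous_map_into_cube using \<gamma>cont by auto
        qed
      qed
      then show ?thesis unfolding X continuous_map_in_subtopology using \<gamma>S by auto
    qed
    define p where "p = (\<lambda>x::nat \<Rightarrow> real. x 0)"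
    have pcont: "continuous_map (simplex_top 1) euclideanreal p"
      unfolding simplex_top_def p_def
      by (rule continuous_map_from_subtopology) (metis UNIV_I continuous_map_product_coordinates)
    have "openin (simplex_top 1) {x \<in> topspace (simplex_top 1). (\<gamma> \<circ> p) x \<in> U}"
      by (rule Ucont) (rule continuous_map_compose[OF pcont \<gamma>map])
    define j where "j = (\<lambda>s::real. \<lambda>i::nat. if i = 0 then s else if i = 1 then 1 - s else 0)"
    have jcont: "continuous_map (top_of_set {0..1}) (simplex_top 1) j"
      unfolding simplex_top_def continuous_map_in_subtopology
    proof (intro conjI)
      show "continuous_map (top_of_set {0..1}) (powertop_real UNIV) j"
        unfolding continuous_map_componentwise_UNIV
      proof
        fix i :: nat
        show "continuous_map (top_of_set {0..1}) euclideanreal (\<lambda>x. j x i)"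
          unfolding j_def by (cases "i = 0"; cases "i = 1") (auto intro: continuous_intros)
      qed
      show "j \<in> topspace (top_of_set {0..1}) \<rightarrow> standard_simplex 1"
        unfolding standard_simplex_def j_def by auto
    qed
    have "openin (top_of_set {0..1}) {s \<in> topspace (top_of_set {0..1}). j s \<in> {x \<in> topspace (simplex_top 1). (\<gamma> \<circ> p) x \<in> U}}"
      by (rule openin_continuous_map_preimage[OF jcont]) fact
    moreover have "{s \<in> topspace (top_of_set {0..1}). j s \<in> {x \<in> topspace (simplex_top 1). (\<gamma> \<circ> p) x \<in> U}}
       = {s \<in> {0..1}. \<gamma> s \<in> U}"
      using jcont unfolding continuous_map_def by (auto simp: p_def j_def)
    ultimately have op: "openin (top_of_set {0..1}) {s \<in> {0..1}. \<gamma> s \<in> U}" by simp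
    have "0 \<in> {s \<in> {0..1}. \<gamma> s \<in> U}" using \<gamma>0 lU by simp
    then obtain \<delta> where \<delta>: "\<delta> > 0" "\<forall>x'\<in>{0..1}. dist x' 0 < \<delta> \<longrightarrow> x' \<in> {s \<in> {0..1}. \<gamma> s \<in> U}"
      using op unfolding openin_euclidean_subtopology_iff by blast
    obtain m where m: "(1/2::real)^m < \<delta>" using real_arch_pow_inv[OF \<delta>(1), of "1/2"] by auto
    have "cen m \<in> {0..1}" "dist (cen m) 0 < \<delta>"
    proof -
      have "(1/2::real)^m \<le> 1" by (simp add: power_le_one)
      then show "cen m \<in> {0..1}" by (simp add: cen_def)
      have q: "0 \<le> (1/2::real)^m" by simp
      have "dist (cen m) 0 = 3 * (1/2)^m / 4" using q by (simp add: cen_def dist_real_def)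
      then show "dist (cen m) 0 < \<delta>" using m q by linarith
    qed
    then have "\<gamma> (cen m) \<in> U" using \<delta>(2) by blast
    then show False using \<gamma>c a(3) by simp
  qed
  show "openin ?X U"
  proof (subst openin_subopen, intro ballI)
    fix l assume "l \<in> U"
    then obtain r where r: "r > 0" "mball l r \<inter> S \<subseteq> U" using ball by blast
    have "openin ?X (mball l r \<inter> S)" by (rule openin_subtopology_Int) simp
    moreover have "l \<in> mball l r \<inter> S" using \<open>l \<in> U\<close> US S r(1) by auto
    ultimately show "\<exists>T. openin ?X T \<and> l \<in> T \<and> T \<subseteq> U" using r(2) by blast
  qed
qed

end


lemma card_less_bij:
  fixes A :: "nat set"
  assumes "finite A"
  shows "bij_betw (\<lambda>i. card {j\<in>A. j < i}) A {..<card A}"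
proof -
  let ?c = "\<lambda>i. card {j\<in>A. j < i}"
  have lt: "?c i < ?c i'" if "i \<in> A" "i' \<in> A" "i < i'" for i i'
  proof (rule psubset_card_mono)
    show "finite {j\<in>A. j < i'}" by (rule finite_subset[OF _ assms]) blast
    have "{j\<in>A. j < i} \<subseteq> {j\<in>A. j < i'}" using that(3) by auto
    moreover have "i \<in> {j\<in>A. j < i'}" "i \<notin> {j\<in>A. j < i}" using that by auto
    ultimately show "{j\<in>A. j < i} \<subset> {j\<in>A. j < i'}" by blast
  qed
  have inj: "inj_on ?c A"
  proof (rule inj_onI)
    fix i i' assume "i \<in> A" "i' \<in> A" "?c i = ?c i'"
    then show "i = i'" using lt[of i i'] lt[of i' i] by (metis linorder_neqE_nat less_irrefl)
  qed
  have sub: "?c ` A \<subseteq> {..<card A}"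
  proof
    fix x assume "x \<in> ?c ` A"
    then obtain i where i: "i \<in> A" "x = ?c i" by blast
    have "{j\<in>A. j < i} \<subseteq> A" "i \<in> A" "i \<notin> {j\<in>A. j < i}" using i(1) by auto
    then have "{j\<in>A. j < i} \<subset> A" by blast
    then show "x \<in> {..<card A}" using i(2) psubset_card_mono[OF assms] by auto
  qed
  have "card (?c ` A) = card {..<card A}" using card_image[OF inj] by simp
  then have "?c ` A = {..<card A}" using card_subset_eq[OF _ sub] by simp
  then show ?thesis using inj by (rule bij_betw_imageI[rotated])
qed

lemma NP_k: "0 < e \<Longrightarrow> NP e" by unfold_locales

context NP
begin

lemma PB_char: "P_boundary n e = {\<phi> \<in> N_set n e. \<exists>j<n. \<forall>t\<in>{0..e}. \<phi> t j = 0}"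
proof (rule Set.set_eqI, rule iffI)
  fix \<psi> assume "\<psi> \<in> P_boundary n e"
  then obtain S k \<phi> where \<psi>: "\<psi> = restrict (\<lambda>t. face_map n S (\<phi> t)) {0..e}"
    and S: "S \<subseteq> {..<n}" "S \<noteq> {}" and k: "k = n - card S" "1 \<le> k" and \<phi>: "\<phi> \<in> N_set k e"
    unfolding P_boundary_def by blast
  interpret K: NP k e using NP_k[OF e_pos] by simp
  define A where "A = {..<n} - S"
  define c where "c = (\<lambda>i. card {j\<in>A. j < i})"
  have finS: "finite S" using S(1) finite_subset by blast
  have cardA: "card A = k" unfolding A_def k(1) using S(1) finS by (simp add: card_Diff_subset)
  have bij: "bij_betw c A {..<k}" unfolding c_def cardA[symmetric] by (rule card_less_bij) (simp add: A_def)
  have cA: "c i < k" if "i \<in> A" for i using bij that by (auto simp: bij_betw_def)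
  have ceq: "card {j. j < i \<and> j \<notin> S} = c i" if "i < n" for i
  proof -
    have "{j. j < i \<and> j \<notin> S} = {j\<in>A. j < i}" using that by (auto simp: A_def)
    then show ?thesis by (simp add: c_def)
  qed
  have fm: "face_map n S x i = (if i \<in> A then x (c i) else 0)" for x i
    unfolding face_map_def using ceq by (auto simp: A_def)
  have \<psi>t: "\<psi> t i = (if i \<in> A then \<phi> t (c i) else 0)" if "t \<in> {0..e}" for t i
    using that by (simp add: \<psi> fm)
  have "\<psi> \<in> N_set n e"
    unfolding N_set_iff
  proof (intro conjI ballI allI impI)
    show "\<psi> \<in> extensional {0..e}" by (simp add: \<psi>)
  next
    fix t assume t: "t \<in> {0..e}"
    have pc: "\<phi> t \<in> cubeset k" by (rule K.N_set_cube[OF \<phi> t])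
    show "\<psi> t \<in> cubeset n"
      unfolding cubeset_def
    proof (intro CollectI conjI allI impI)
      fix i assume "n \<le> i" then show "\<psi> t i = 0" using \<psi>t[OF t] by (simp add: A_def)
    next
      fix i assume "i < n"
      show "0 \<le> \<psi> t i" "\<psi> t i \<le> 1"
        using \<psi>t[OF t, of i] cA[of i] pc by (auto simp: cubeset_def)
    qed
    have "(\<Sum>i<n. \<psi> t i) = (\<Sum>i\<in>A. \<psi> t i) + (\<Sum>i\<in>S. \<psi> t i)"
      unfolding A_def by (rule sum.subset_diff[OF S(1)]) simp
    also have "(\<Sum>i\<in>S. \<psi> t i) = 0" using \<psi>t[OF t] by (simp add: A_def)
    also have "(\<Sum>i\<in>A. \<psi> t i) = (\<Sum>i\<in>A. \<phi> t (c i))" using \<psi>t[OF t] by simp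
    also have "\<dots> = (\<Sum>j<k. \<phi> t j)" by (rule sum.reindex_bij_betw[OF bij])
    also have "\<dots> = t" by (rule K.N_set_sum[OF \<phi> t])
    finally show "(\<Sum>i<n. \<psi> t i) = t" by simp
  next
    fix i assume "i < n"
    show "mono_on {0..e} (\<lambda>t. \<psi> t i)"
    proof (cases "i \<in> A")
      case True
      have m: "mono_on {0..e} (\<lambda>t. \<phi> t (c i))" by (rule K.N_set_mono[OF \<phi> cA[OF True]])
      show ?thesis
      proof (rule mono_onI)
        fix r s assume "r \<in> {0..e}" "s \<in> {0..e}" "r \<le> s"
        then show "\<psi> r i \<le> \<psi> s i" using mono_onD[OF m] \<psi>t True by simp
      qed
    next
      case False
      show ?thesis by (rule mono_onI) (simp add: \<psi>t False)
    qed
  qed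
  moreover obtain j where "j \<in> S" using S(2) by blast
  then have "j < n" "\<forall>t\<in>{0..e}. \<psi> t j = 0" using S(1) \<psi>t by (auto simp: A_def)
  ultimately show "\<psi> \<in> {\<phi> \<in> N_set n e. \<exists>j<n. \<forall>t\<in>{0..e}. \<phi> t j = 0}" by blast
next
  fix \<psi> assume "\<psi> \<in> {\<phi> \<in> N_set n e. \<exists>j<n. \<forall>t\<in>{0..e}. \<phi> t j = 0}"
  then obtain j0 where \<psi>: "\<psi> \<in> N_set n e" and j0: "j0 < n" "\<forall>t\<in>{0..e}. \<psi> t j0 = 0" by blast
  have n2: "2 \<le> n"
  proof (rule ccontr)
    assume "\<not> 2 \<le> n"
    then have "n = 1" "j0 = 0" using j0 by auto
    then have "\<psi> e 0 = e" using N_set_sum[OF \<psi>, of e] e_pos by simp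
    then show False using j0(2) \<open>j0 = 0\<close> e_pos by auto
  qed
  define k where "k = n - 1"
  interpret K: NP k e using NP_k[OF e_pos] by simp
  define ins where "ins = (\<lambda>j::nat. if j < j0 then j else Suc j)"
  have insbij: "bij_betw ins {..<k} ({..<n} - {j0})"
  proof (rule bij_betw_imageI)
    show "inj_on ins {..<k}" unfolding ins_def by (rule inj_onI) (auto split: if_splits)
    show "ins ` {..<k} = {..<n} - {j0}"
    proof (rule Set.set_eqI, rule iffI)
      fix i assume "i \<in> ins ` {..<k}" then show "i \<in> {..<n} - {j0}" using j0 by (auto simp: ins_def k_def)
    next
      fix i assume i: "i \<in> {..<n} - {j0}"
      show "i \<in> ins ` {..<k}"
      proof (cases "i < j0")
        case True then have "ins i = i" "i < k" using j0 by (auto simp: ins_def k_def)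
        then show ?thesis by (metis image_eqI lessThan_iff)
      next
        case False then have "ins (i - 1) = i" "i - 1 < k" using i by (auto simp: ins_def k_def)
        then show ?thesis by (metis image_eqI lessThan_iff)
      qed
    qed
  qed
  have insn: "ins j < n" if "j < k" for j using that n2 by (auto simp: ins_def k_def)
  define \<phi> where "\<phi> = restrict (\<lambda>t j. if j < k then \<psi> t (ins j) else 0) {0..e}"
  have \<phi>t: "\<phi> t j = (if j < k then \<psi> t (ins j) else 0)" if "t \<in> {0..e}" for t j
    using that by (simp add: \<phi>_def)
  have \<phi>N: "\<phi> \<in> N_set k e"
    unfolding K.N_set_iff
  proof (intro conjI ballI allI impI)
    show "\<phi> \<in> extensional {0..e}" by (simp add: \<phi>_def)
  next
    fix t assume t: "t \<in> {0..e}"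
    have pc: "\<psi> t \<in> cubeset n" by (rule N_set_cube[OF \<psi> t])
    show "\<phi> t \<in> cubeset k"
      unfolding cubeset_def
    proof (intro CollectI conjI allI impI)
      fix j assume "k \<le> j" then show "\<phi> t j = 0" by (simp add: \<phi>t[OF t])
    next
      fix j assume "j < k"
      then show "0 \<le> \<phi> t j" "\<phi> t j \<le> 1" using \<phi>t[OF t] insn[of j] pc by (auto simp: cubeset_def)
    qed
    have "(\<Sum>j<k. \<phi> t j) = (\<Sum>j<k. \<psi> t (ins j))" using \<phi>t[OF t] by simp
    also have "\<dots> = (\<Sum>i\<in>{..<n} - {j0}. \<psi> t i)" by (rule sum.reindex_bij_betw[OF insbij])
    also have "\<dots> = (\<Sum>i<n. \<psi> t i) - \<psi> t j0" using j0(1) by (simp add: sum_diff1)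
    also have "\<dots> = t" using N_set_sum[OF \<psi> t] j0(2) t by simp
    finally show "(\<Sum>j<k. \<phi> t j) = t" .
  next
    fix j assume "j < k"
    have m: "mono_on {0..e} (\<lambda>t. \<psi> t (ins j))" by (rule N_set_mono[OF \<psi> insn[OF \<open>j < k\<close>]])
    show "mono_on {0..e} (\<lambda>t. \<phi> t j)"
    proof (rule mono_onI)
      fix r s assume "r \<in> {0..e}" "s \<in> {0..e}" "r \<le> s"
      then show "\<phi> r j \<le> \<phi> s j" using mono_onD[OF m] \<phi>t \<open>j < k\<close> by simp
    qed
  qed
  have fmeq: "face_map n {j0} (\<phi> t) = \<psi> t" if t: "t \<in> {0..e}" for t
  proof (rule ext)
    fix i
    have pc: "\<psi> t \<in> cubeset n" by (rule N_set_cube[OF \<psi> t])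
    show "face_map n {j0} (\<phi> t) i = \<psi> t i"
    proof (cases "i = j0 \<or> n \<le> i")
      case True
      then show ?thesis using j0(2) t pc by (auto simp: face_map_def cubeset_def)
    next
      case False
      then have i: "i \<noteq> j0" "i < n" by auto
      define q where "q = (if i < j0 then i else i - 1)"
      have cq: "card {j. j < i \<and> j \<notin> {j0}} = q"
      proof (cases "i < j0")
        case True
        then have "{j. j < i \<and> j \<notin> {j0}} = {..<i}" by auto
        then show ?thesis using True by (simp add: q_def)
      next
        case False
        then have "{j. j < i \<and> j \<notin> {j0}} = {..<i} - {j0}" by auto
        then show ?thesis using False i by (simp add: q_def)
      qed
      have "q < k" "ins q = i" using i n2 j0(1) by (auto simp: q_def k_def ins_def)
      then show ?thesis using i cq by (simp add: face_map_def \<phi>t[OF t])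
    qed
  qed
  have "\<psi> = restrict (\<lambda>t. face_map n {j0} (\<phi> t)) {0..e}"
    by (rule extensionalityI[OF N_set_extensional[OF \<psi>]]) (auto simp: fmeq)
  moreover have "{j0} \<subseteq> {..<n}" "{j0} \<noteq> {}" "k = n - card {j0}" "1 \<le> k"
    using j0 n2 by (auto simp: k_def)
  ultimately show "\<psi> \<in> P_boundary n e"
    unfolding P_boundary_def using \<phi>N by blast
qed

end


context NP
begin

lemma dkM: "delta_kelley mtopology = mtopology"
proof -
  have "delta_generated (subtopology mtopology (N_set n e))"
  proof (rule DG)
    show "N_set n e \<subseteq> N_set n e" by simp
    fix l assume l: "l \<in> N_set n e"
    show "\<exists>\<epsilon>>0. \<forall>a\<in>N_set n e. dd a l < \<epsilon> \<longrightarrow> (\<forall>lam\<in>{0..1}. cc lam l a \<in> N_set n e)"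
      using cc_N_set[OF l] by (intro exI[of _ 1]) auto
  qed
  then show ?thesis by (simp add: delta_generated_def)
qed

lemma N_top_eq_M: "N_top n e = mtopology"
  using N_top_eq_CT PT_eq_CT PT_eq_M dkM by simp

lemma PB_sub: "P_boundary n e \<subseteq> N_set n e" using PB_char by auto

lemma closedin_PB: "closedin mtopology (P_boundary n e)"
proof -
  have "closedin PT {x \<in> topspace PT. \<forall>t\<in>{0..e}. (\<lambda>f. f t j) x \<in> {0}}" for j
    by (rule closedin_Collect_all) (auto intro: cont_eval_PT)
  then have c: "closedin PT {\<phi> \<in> N_set n e. \<forall>t\<in>{0..e}. \<phi> t j = 0}" for j by (simp add: topspace_PT)
  have "P_boundary n e = \<Union> ((\<lambda>j. {\<phi> \<in> N_set n e. \<forall>t\<in>{0..e}. \<phi> t j = 0}) ` {..<n})"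
    unfolding PB_char by auto
  moreover have "closedin PT (\<Union> ((\<lambda>j. {\<phi> \<in> N_set n e. \<forall>t\<in>{0..e}. \<phi> t j = 0}) ` {..<n}))"
    by (rule closedin_Union) (use c in auto)
  ultimately show ?thesis using PT_eq_M by simp
qed

lemma star_PB:
  assumes "l \<in> P_boundary n e"
  shows "\<exists>\<epsilon>>0. \<forall>a\<in>P_boundary n e. dd a l < \<epsilon> \<longrightarrow> (\<forall>lam\<in>{0..(1::real)}. cc lam l a \<in> P_boundary n e)"
proof -
  have lN: "l \<in> N_set n e" using assms PB_sub by blast
  define P where "P = (\<lambda>j \<epsilon>. \<forall>a\<in>N_set n e. dd a l < \<epsilon> \<longrightarrow> (\<forall>t\<in>{0..e}. a t j = 0) \<longrightarrow> (\<forall>t\<in>{0..e}. l t j = 0))"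
  have "\<exists>\<epsilon>>0. \<forall>j\<in>{..<n}. P j \<epsilon>"
  proof (rule finite_common_radius[of "{..<n}" P])
    fix j assume "j \<in> {..<n}"
    show "\<exists>\<epsilon>>0. P j \<epsilon>"
      unfolding P_def
    proof (cases "\<forall>t\<in>{0..e}. l t j = 0")
      case True then show "\<exists>\<epsilon>>0. \<forall>a\<in>N_set n e. dd a l < \<epsilon> \<longrightarrow> (\<forall>t\<in>{0..e}. a t j = 0) \<longrightarrow> (\<forall>t\<in>{0..e}. l t j = 0)"
        by (intro exI[of _ 1]) auto
    next
      case False
      then obtain t where t: "t \<in> {0..e}" "l t j \<noteq> 0" by blast
      show "\<exists>\<epsilon>>0. \<forall>a\<in>N_set n e. dd a l < \<epsilon> \<longrightarrow> (\<forall>t\<in>{0..e}. a t j = 0) \<longrightarrow> (\<forall>t\<in>{0..e}. l t j = 0)"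
      proof (intro exI[of _ "\<bar>l t j\<bar>"] conjI ballI impI)
        show "0 < \<bar>l t j\<bar>" using t by simp
        fix a assume a: "a \<in> N_set n e" "dd a l < \<bar>l t j\<bar>" "\<forall>t\<in>{0..e}. a t j = 0"
        fix t' assume "t' \<in> {0..e}"
        have "\<bar>a t j - l t j\<bar> \<le> dd a l" by (rule coord_le_dd[OF a(1) lN])
        then have False using a(2,3) t by simp
        then show "l t' j = 0" by simp
      qed
    qed
  next
    fix j and r r' :: real
    assume "P j r" "0 < r'" "r' \<le> r"
    then show "P j r'" unfolding P_def by force
  qed simp
  then obtain \<epsilon> where \<epsilon>: "\<epsilon> > 0"
    "\<forall>j\<in>{..<n}. \<forall>a\<in>N_set n e. dd a l < \<epsilon> \<longrightarrow> (\<forall>t\<in>{0..e}. a t j = 0) \<longrightarrow> (\<forall>t\<in>{0..e}. l t j = 0)"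
    unfolding P_def by blast
  show ?thesis
  proof (intro exI[of _ \<epsilon>] conjI ballI impI)
    show "0 < \<epsilon>" by (rule \<epsilon>(1))
    fix a and lam :: real assume a: "a \<in> P_boundary n e" "dd a l < \<epsilon>" "lam \<in> {0..1}"
    obtain j where j: "j < n" "\<forall>t\<in>{0..e}. a t j = 0" "a \<in> N_set n e" using a(1) PB_char by auto
    have lj: "\<forall>t\<in>{0..e}. l t j = 0" using \<epsilon>(2) j a(2) by blast
    have "cc lam l a \<in> N_set n e" using cc_N_set lN j(3) a(3) by auto
    moreover have "\<forall>t\<in>{0..e}. cc lam l a t j = 0" using lj j(2) by (simp add: cc_def)
    ultimately show "cc lam l a \<in> P_boundary n e" using PB_char j(1) by blast
  qed
qed

lemma main:
  shows "P_boundary n e \<subseteq> topspace (N_top n e)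
    \<and> closedin (N_top n e) (P_boundary n e)
    \<and> delta_generated (subtopology (N_top n e) (P_boundary n e))
    \<and> delta_hausdorff (subtopology (N_top n e) (P_boundary n e))
    \<and> metrizable_space (subtopology (N_top n e) (P_boundary n e))
    \<and> compact_space (subtopology (N_top n e) (P_boundary n e))
    \<and> sequentially_compact_top (subtopology (N_top n e) (P_boundary n e))"
proof -
  let ?PB = "P_boundary n e"
  let ?X = "subtopology mtopology ?PB"
  have 1: "?PB \<subseteq> topspace mtopology" using PB_sub by simp
  have 3: "delta_generated ?X" by (rule DG[OF PB_sub star_PB])
  have H: "Hausdorff_space ?X" by (rule Hausdorff_space_subtopology[OF Hausdorff_space_mtopology])
  have 4: "delta_hausdorff ?X"
  proof -
    have "closedin (prod_topology ?X ?X) ((\<lambda>x. (x,x)) ` topspace ?X)"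
      using H Hausdorff_space_closedin_diagonal by blast
    moreover have "(\<lambda>x. (x,x)) ` topspace ?X = {(x, x) | x. x \<in> topspace ?X}" by auto
    ultimately show ?thesis unfolding delta_hausdorff_def using closedin_imp_delta_kelley by simp
  qed
  have 5: "metrizable_space ?X" by (rule metrizable_space_subtopology[OF metrizable_space_mtopology])
  have cM: "compact_space mtopology" using compact_PT PT_eq_M by simp
  have 6: "compact_space ?X"
    using closedin_compact_space[OF cM closedin_PB] compact_space_subtopology by blast
  have 7: "sequentially_compact_top ?X"
  proof -
    have MS: "Metric_space ?PB dd" by (rule subspace[OF PB_sub])
    have SM: "Submetric (N_set n e) dd ?PB"
      by (simp add: Submetric.intro Submetric_axioms_def PB_sub Metric_space_axioms)
    have eqt: "Metric_space.mtopology ?PB dd = ?X" by (rule Submetric.mtopology_submetric[OF SM])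
    have cs: "compact_space (Metric_space.mtopology ?PB dd)" using 6 eqt by simp
    have seq0: "\<forall>\<sigma>::nat \<Rightarrow> _. range \<sigma> \<subseteq> ?PB \<longrightarrow> (\<exists>l r. l \<in> ?PB \<and> strict_mono r \<and> limitin (Metric_space.mtopology ?PB dd) (\<sigma> \<circ> r) l sequentially)"
      using Metric_space.compact_space_sequentially[OF MS, THEN iffD1, OF cs] .
    have seq: "\<exists>l r. l \<in> ?PB \<and> strict_mono r \<and> limitin ?X (\<sigma> \<circ> r) l sequentially"
      if "range \<sigma> \<subseteq> ?PB" for \<sigma> :: "nat \<Rightarrow> real \<Rightarrow> nat \<Rightarrow> real"
      unfolding eqt[symmetric] by (rule seq0[rule_format, OF that])
    have tX: "topspace ?X = ?PB" using PB_sub by auto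
    show ?thesis
      unfolding sequentially_compact_top_def tX
    proof (intro allI impI)
      fix s :: "nat \<Rightarrow> real \<Rightarrow> nat \<Rightarrow> real" assume "\<forall>m. s m \<in> ?PB"
      then have "range s \<subseteq> ?PB" by blast
      then show "\<exists>l r. l \<in> ?PB \<and> strict_mono r \<and> limitin ?X (s \<circ> r) l sequentially" by (rule seq)
    qed
  qed
  show ?thesis using 1 closedin_PB 3 4 5 6 7 N_top_eq_M by simp
qed

end

theorem proposition4p8:
  fixes n :: nat and \<epsilon> :: real
  assumes "1 \<le> n" and "0 < \<epsilon>" and "\<epsilon> < 1"
  shows "P_boundary n \<epsilon> \<subseteq> topspace (N_top n \<epsilon>)
    \<and> closedin (N_top n \<epsilon>) (P_boundary n \<epsilon>)
    \<and> delta_generated (subtopology (N_top n \<epsilon>) (P_boundary n \<epsilon>))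
    \<and> delta_hausdorff (subtopology (N_top n \<epsilon>) (P_boundary n \<epsilon>))
    \<and> metrizable_space (subtopology (N_top n \<epsilon>) (P_boundary n \<epsilon>))
    \<and> compact_space (subtopology (N_top n \<epsilon>) (P_boundary n \<epsilon>))
    \<and> sequentially_compact_top (subtopology (N_top n \<epsilon>) (P_boundary n \<epsilon>))"
proof -
  interpret NP n \<epsilon> using assms(2) by unfold_locales
  show ?thesis by (rule main)
qed


end
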